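(* Let $p>5$ be a prime, $q=p^h$, and let $\mathcal{F}$ be the projective closure of $ax^n+by^m=1$ over $\mathbb{F}_q$, with $a,b\in\mathbb{F}_q^*$ and $m,n$ positive integers with $n\ge m>2$. If $p\mid(2n-1)$ and $p\mid(m-1)$, then $\mathcal{F}$ is $\mathbb{F}_q$-Frobenius classical with respect to conics.
   Context: With $\varphi_0,\dots,\varphi_5$ the monomials of degree 2 in $x,y,1$, $\tau$ separating and $D^{(k)}_\tau$ Hasse derivatives, the $\mathbb{F}_q$-Frobenius order sequence w.r.t. conics is the lexicographically smallest $\nu_0<\dots<\nu_4$ such that the $6\times6$ determinant with first row $(\varphi_j^q)_j$ and rows $(D^{(\nu_i)}_\tau\varphi_j)_j$ is nonzero; the curve is $\mathbb{F}_q$-Frobenius classical w.r.t. conics if $\nu_i=i$ for all $i$. *)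

theory Defs
  imports Main "Jordan_Normal_Form.Determinant"
begin

definition is_field_emb :: "('a::field \<Rightarrow> 'k::field) \<Rightarrow> bool" where
  "is_field_emb \<iota> \<longleftrightarrow> inj \<iota> \<and> \<iota> 0 = 0 \<and> \<iota> 1 = 1 \<and>
     (\<forall>u v. \<iota> (u + v) = \<iota> u + \<iota> v) \<and> (\<forall>u v. \<iota> (u * v) = \<iota> u * \<iota> v)"

text \<open>K (with embedding of F_q) is the function field F_q(x,y) of the curve
  a x^n + b y^m = 1: x is transcendental over F_q, x and y satisfy the equation,
  and K is generated over F_q by x and y (every element is a quotient of
  polynomial expressions in x, y with coefficients in F_q).\<close>
definition fermat_function_field ::
  "('a::field \<Rightarrow> 'k::field) \<Rightarrow> 'a \<Rightarrow> 'a \<Rightarrow> nat \<Rightarrow> nat \<Rightarrow> 'k \<Rightarrow> 'k \<Rightarrow> bool" where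
  "fermat_function_field \<iota> a b n m x y \<longleftrightarrow>
     is_field_emb \<iota> \<and>
     \<iota> a * x ^ n + \<iota> b * y ^ m = 1 \<and>
     (\<forall>(N::nat) (c::nat \<Rightarrow> 'a). (\<Sum>i<N. \<iota> (c i) * x ^ i) = 0 \<longrightarrow> (\<forall>i<N. c i = 0)) \<and>
     (\<forall>z. \<exists>(N::nat) (P::nat \<Rightarrow> nat \<Rightarrow> 'a) (Q::nat \<Rightarrow> nat \<Rightarrow> 'a).
        (\<Sum>i<N. \<Sum>j<N. \<iota> (Q i j) * x ^ i * y ^ j) \<noteq> 0 \<and>
        z = (\<Sum>i<N. \<Sum>j<N. \<iota> (P i j) * x ^ i * y ^ j) /
            (\<Sum>i<N. \<Sum>j<N. \<iota> (Q i j) * x ^ i * y ^ j))"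

text \<open>D is a family of Hasse derivatives of K over F_q with respect to tau:
  D^(0) = id, each D^(k) is additive and F_q-constant-killing, the generalized
  Leibniz rule holds, and D^(1) tau = 1, D^(k) tau = 0 for k >= 2.
  (Such a family exists exactly when tau is separating, and is then unique.)\<close>
definition hasse_derivatives ::
  "('a::field \<Rightarrow> 'k::field) \<Rightarrow> 'k \<Rightarrow> (nat \<Rightarrow> 'k \<Rightarrow> 'k) \<Rightarrow> bool" where
  "hasse_derivatives \<iota> \<tau> D \<longleftrightarrow>
     (\<forall>z. D 0 z = z) \<and>
     (\<forall>k u v. D k (u + v) = D k u + D k v) \<and>
     (\<forall>k u v. D k (u * v) = (\<Sum>i\<le>k. D i u * D (k - i) v)) \<and>
     (\<forall>k c. 1 \<le> k \<longrightarrow> D k (\<iota> c) = 0) \<and>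
     D 1 \<tau> = 1 \<and> (\<forall>k\<ge>2. D k \<tau> = 0)"

definition conic_monomials :: "'k::field \<Rightarrow> 'k \<Rightarrow> 'k list" where
  "conic_monomials x y = [x ^ 2, x * y, y ^ 2, x, y, 1]"

definition frob_conic_det ::
  "nat \<Rightarrow> (nat \<Rightarrow> 'k \<Rightarrow> 'k) \<Rightarrow> 'k list \<Rightarrow> nat list \<Rightarrow> 'k::field" where
  "frob_conic_det q D \<phi> \<nu> =
     det (mat 6 6 (\<lambda>(i, j). if i = 0 then (\<phi> ! j) ^ q else D (\<nu> ! (i - 1)) (\<phi> ! j)))"

definition frob_conic_order_seq ::
  "nat \<Rightarrow> (nat \<Rightarrow> 'k \<Rightarrow> 'k) \<Rightarrow> 'k \<Rightarrow> 'k::field \<Rightarrow> nat list \<Rightarrow> bool" where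
  "frob_conic_order_seq q D x y \<nu> \<longleftrightarrow>
     length \<nu> = 5 \<and> sorted_wrt (<) \<nu> \<and>
     frob_conic_det q D (conic_monomials x y) \<nu> \<noteq> 0 \<and>
     (\<forall>\<nu>'. length \<nu>' = 5 \<and> sorted_wrt (<) \<nu>' \<and>
            frob_conic_det q D (conic_monomials x y) \<nu>' \<noteq> 0 \<longrightarrow>
            \<nu> = \<nu>' \<or> lexordp (<) \<nu> \<nu>')"

definition frob_classical_conics ::
  "nat \<Rightarrow> (nat \<Rightarrow> 'k \<Rightarrow> 'k) \<Rightarrow> 'k \<Rightarrow> 'k::field \<Rightarrow> bool" where
  "frob_classical_conics q D x y \<longleftrightarrow> frob_conic_order_seq q D x y [0, 1, 2, 3, 4]"

end

theory Submission
  imports Defs "HOL-Computational_Algebra.Formal_Power_Series" "HOL-Computational_Algebra.Polynomial"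
    "HOL-Computational_Algebra.Primes" "HOL-Number_Theory.Residues"
begin


hide_const (open) up_ring.coeff up_ring.monom

lemma frob_add:
  fixes a b :: "'r::comm_ring_1"
  assumes "prime p" "of_nat p = (0::'r)"
  shows "(a+b)^p = a^p + b^p"
proof -
  have p0: "p > 0" using assms(1) prime_gt_0_nat by blast
  have mid: "of_nat (p choose k) = (0::'r)" if "0 < k" "k < p" for k
  proof -
    have "p dvd (p choose k)" using dvd_choose_prime[of k p] that assms(1) by auto
    then obtain r where "p choose k = p * r" by (auto elim!: dvdE)
    then show ?thesis using assms(2) by simp
  qed
  have "(a+b)^p = (\<Sum>k\<le>p. of_nat (p choose k) * a^k * b^(p-k))" by (rule binomial_ring)
  also have "\<dots> = (\<Sum>k\<in>{0,p}. of_nat (p choose k) * a^k * b^(p-k))"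
    by (rule sum.mono_neutral_right) (use mid in auto)
  also have "\<dots> = a^p + b^p" using p0 by simp
  finally show ?thesis .
qed

definition eq5 :: "'k::comm_ring_1 fps \<Rightarrow> 'k fps \<Rightarrow> bool" where
  "eq5 f g \<longleftrightarrow> (\<forall>k\<le>4. (fps_nth f k) = (fps_nth g k))"

lemma eq5_refl: "eq5 f f" by (simp add: eq5_def)
lemma eq5_sym: "eq5 f g \<Longrightarrow> eq5 g f" by (simp add: eq5_def)
lemma eq5_trans: "eq5 f g \<Longrightarrow> eq5 g h \<Longrightarrow> eq5 f h" by (simp add: eq5_def)
lemma eq5_add: "eq5 f g \<Longrightarrow> eq5 f' g' \<Longrightarrow> eq5 (f + f') (g + g')" by (simp add: eq5_def)
lemma eq5_diff: "eq5 f g \<Longrightarrow> eq5 f' g' \<Longrightarrow> eq5 (f - f') (g - g')" by (simp add: eq5_def)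
lemma eq5_mult: assumes "eq5 f g" "eq5 f' g'" shows "eq5 (f * f') (g * g')"
  unfolding eq5_def
proof (intro allI impI)
  fix k :: nat assume k: "k \<le> 4"
  show "(fps_nth (f * f') k) = (fps_nth (g * g') k)"
    unfolding fps_mult_nth
    by (rule sum.cong) (use assms k in \<open>auto simp: eq5_def\<close>)
qed
lemma eq5_power: "eq5 f g \<Longrightarrow> eq5 (f ^ j) (g ^ j)"
  by (induct j) (auto intro: eq5_mult eq5_refl)

lemma fps_power_low:
  fixes f :: "'k::comm_ring_1 fps"
  assumes "(fps_nth f 0) = 0"
  shows "k < j \<Longrightarrow> (fps_nth (f ^ j) k) = 0"
proof (induct j arbitrary: k)
  case 0 then show ?case by simp
next
  case (Suc j)
  have "(fps_nth (f ^ Suc j) k) = (\<Sum>i=0..k. (fps_nth f i) * (fps_nth (f ^ j) (k - i)))"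
    by (simp add: fps_mult_nth)
  also have "\<dots> = 0"
  proof (rule sum.neutral, intro ballI)
    fix i assume "i \<in> {0..k}"
    show "(fps_nth f i) * (fps_nth (f ^ j) (k - i)) = 0"
    proof (cases "i = 0")
      case True then show ?thesis using assms by simp
    next
      case False
      then have "k - i < j" using Suc.prems \<open>i \<in> {0..k}\<close> by auto
      then show ?thesis using Suc.hyps by simp
    qed
  qed
  finally show ?case .
qed

lemma fps_power_diag:
  fixes f :: "'k::comm_ring_1 fps"
  assumes "(fps_nth f 0) = 0"
  shows "(fps_nth (f ^ j) j) = ((fps_nth f 1)) ^ j"
proof (induct j)
  case 0 then show ?case by simp
next
  case (Suc j)
  have "(fps_nth (f ^ Suc j) (Suc j)) = (\<Sum>i=0..Suc j. (fps_nth f i) * (fps_nth (f ^ j) (Suc j - i)))"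
    by (simp add: fps_mult_nth)
  also have "\<dots> = (\<Sum>i=0..Suc j. if i = 1 then (fps_nth f 1) * (fps_nth (f ^ j) j) else 0)"
  proof (rule sum.cong, simp)
    fix i assume "i \<in> {0..Suc j}"
    show "(fps_nth f i) * (fps_nth (f ^ j) (Suc j - i)) = (if i = 1 then (fps_nth f 1) * (fps_nth (f ^ j) j) else 0)"
      using assms fps_power_low[OF assms, of "Suc j - i" j] \<open>i \<in> {0..Suc j}\<close>
      by (cases "i = 0"; cases "i = 1") auto
  qed
  also have "\<dots> = (fps_nth f 1) * (fps_nth (f ^ j) j)" by simp
  finally show ?case using Suc by simp
qed

lemma triang:
  fixes d :: "'k::field fps"
  assumes d0: "(fps_nth d 0) = 0" and d1: "(fps_nth d 1) \<noteq> 0"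
    and e: "eq5 (fps_const c0 + fps_const c1 * d + fps_const c2 * d^2 + fps_const c3 * d^3 + fps_const c4 * d^4) 0"
  shows "c0 = 0 \<and> c1 = 0 \<and> c2 = 0 \<and> c3 = 0 \<and> c4 = 0"
proof -
  note low = fps_power_low[OF d0] and diag = fps_power_diag[OF d0]
  have E: "c0 * (if k = 0 then 1 else 0) + c1 * (fps_nth d k) + c2 * (fps_nth (d^2) k) + c3 * (fps_nth (d^3) k) + c4 * (fps_nth (d^4) k) = 0"
    if "k \<le> 4" for k
    using e that unfolding eq5_def by (auto)
  have z0: "c0 = 0" using E[of 0] d0 low[of 0 2] low[of 0 3] low[of 0 4] by simp
  have z1: "c1 = 0" using E[of 1] z0 low[of 1 2] low[of 1 3] low[of 1 4] d1 by simp
  have z2: "c2 = 0" using E[of 2] z0 z1 low[of 2 3] low[of 2 4] diag[of 2] d1 by simp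
  have z3: "c3 = 0" using E[of 3] z0 z1 z2 low[of 3 4] diag[of 3] d1 by simp
  have z4: "c4 = 0" using E[of 4] z0 z1 z2 z3 diag[of 4] d1 by simp
  show ?thesis using z0 z1 z2 z3 z4 by blast
qed

lemma char_finite_field:
  assumes "prime p" "card (UNIV::'a::{finite,field} set) = p ^ h"
  shows "of_nat p = (0::'a)"
proof -
  have c0: "CHAR('a) > 0" by (rule finite_imp_CHAR_pos) simp
  have cp: "prime CHAR('a)" using c0 by (rule prime_CHAR_semidom)
  have "CHAR('a) dvd p ^ h" using CHAR_dvd_CARD[where 'a='a] assms(2) by simp
  then have "CHAR('a) dvd p" using cp prime_dvd_power by blast
  then have "CHAR('a) = p" using cp assms(1) primes_dvd_imp_eq by blast
  then show ?thesis by (metis of_nat_CHAR)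
qed



locale hs =
  fixes \<iota> :: "'a::field \<Rightarrow> 'k::field" and D :: "nat \<Rightarrow> 'k \<Rightarrow> 'k"
  assumes emb: "is_field_emb \<iota>" and D0: "\<And>z. D 0 z = z"
    and Dadd: "\<And>k u v. D k (u + v) = D k u + D k v"
    and Dmult: "\<And>k u v. D k (u * v) = (\<Sum>i\<le>k. D i u * D (k - i) v)"
    and Dconst: "\<And>k c. 1 \<le> k \<Longrightarrow> D k (\<iota> c) = 0"
begin

lemma i0: "\<iota> 0 = 0" and i1: "\<iota> 1 = 1" and iadd: "\<iota> (u + v) = \<iota> u + \<iota> v"
  and imult: "\<iota> (u * v) = \<iota> u * \<iota> v" and iinj: "inj \<iota>"
  using emb unfolding is_field_emb_def by auto

lemma ieq0: "\<iota> u = 0 \<longleftrightarrow> u = 0"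
  using iinj i0 by (metis injD)

lemma iminus: "\<iota> (- u) = - \<iota> u"
  using iadd[of u "-u"] i0 by (metis add.commute eq_neg_iff_add_eq_0 add.right_inverse)

lemma idiff: "\<iota> (u - v) = \<iota> u - \<iota> v"
  using iadd[of u "-v"] iminus[of v] by simp

lemma ipower: "\<iota> (u ^ j) = \<iota> u ^ j"
  by (induct j) (simp_all add: i1 imult)

lemma iof_nat: "\<iota> (of_nat j) = of_nat j"
  by (induct j) (simp_all add: i0 i1 iadd)

lemma isum: "\<iota> (sum f A) = sum (\<lambda>i. \<iota> (f i)) A"
  by (induct A rule: infinite_finite_induct) (simp_all add: i0 iadd)

lemma Dzero: "D k 0 = 0"
  using Dadd[of k 0 0] by (metis add_0 add_cancel_right_right)

lemma Dminus: "D k (- u) = - D k u"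
  using Dadd[of k u "-u"] Dzero[of k] by (metis add.commute eq_neg_iff_add_eq_0 add.right_inverse)

lemma Ddiff: "D k (u - v) = D k u - D k v"
  using Dadd[of k u "-v"] Dminus[of k v] by simp

lemma Done: "D k 1 = (if k = 0 then 1 else 0)"
  using Dconst[of k 1] D0[of 1] i1 by auto

lemma Dsum: "D k (sum f A) = sum (\<lambda>i. D k (f i)) A"
  by (induct A rule: infinite_finite_induct) (simp_all add: Dzero Dadd)

lemma D1mult: "D 1 (u * v) = u * D 1 v + D 1 u * v"
  using Dmult[of 1 u v] by (simp add: D0 atMost_Suc)

lemma D1power: assumes "D 1 u = 0" shows "D 1 (u ^ j) = 0"
proof (induct j)
  case 0 show ?case by (simp add: Done)
next
  case (Suc j) show ?case using D1mult[of u "u ^ j"] Suc assms by simp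
qed

definition th :: "'k \<Rightarrow> 'k fps" where "th u = Abs_fps (\<lambda>k. D k u)"

lemma th_nth [simp]: "fps_nth (th u) k = D k u"
  by (simp add: th_def)

lemma th_add: "th (u + v) = th u + th v"
  by (rule fps_ext) (simp add: Dadd)

lemma th_diff: "th (u - v) = th u - th v"
  by (rule fps_ext) (simp add: Ddiff)

lemma th_mult: "th (u * v) = th u * th v"
  by (rule fps_ext) (simp add: Dmult fps_mult_nth atLeast0AtMost)

lemma th_one: "th 1 = 1"
  by (rule fps_ext) (simp add: Done)

lemma th_power: "th (u ^ j) = th u ^ j"
  by (induct j) (simp_all add: th_one th_mult)

lemma th_const: "th (\<iota> c) = fps_const (\<iota> c)"
  by (rule fps_ext) (simp add: Dconst D0)

lemma const_inverse:
  assumes e: "eq5 (th e) (fps_const e)" and nz: "e \<noteq> 0"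
  shows "eq5 (th (inverse e)) (fps_const (inverse e))"
proof -
  have 1: "th e * th (inverse e) = 1" using nz by (simp flip: th_mult add: th_one)
  have "th (inverse e) = fps_const (inverse e) * fps_const e * th (inverse e)"
    using nz by simp
  moreover have "eq5 (fps_const (inverse e) * fps_const e * th (inverse e))
                     (fps_const (inverse e) * th e * th (inverse e))"
    by (intro eq5_mult eq5_refl eq5_sym[OF e])
  moreover have "fps_const (inverse e) * th e * th (inverse e) = fps_const (inverse e)"
    using 1 by (simp add: mult.assoc)
  ultimately show ?thesis by (metis eq5_refl)
qed

lemma const_mult:
  assumes "eq5 (th e) (fps_const e)" "eq5 (th e') (fps_const e')"
  shows "eq5 (th (e * e')) (fps_const (e * e'))"
  using eq5_mult[OF assms] by (simp add: th_mult)

lemma const_frob: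
  assumes p: "prime p" "of_nat p = (0::'k)" "p > 4"
  shows "eq5 (th (u ^ p)) (fps_const (u ^ p))"
proof -
  define d where "d = th u - fps_const u"
  have d0: "fps_nth d 0 = 0" by (simp add: d_def D0)
  have pz: "of_nat p = (0::'k fps)" using p(2) by (metis fps_of_nat fps_const_0_eq_0)
  have "th (u ^ p) = (fps_const u + d) ^ p" by (simp add: th_power d_def)
  also have "\<dots> = fps_const (u ^ p) + d ^ p" using frob_add[OF p(1) pz] by simp
  finally have eq: "th (u ^ p) = fps_const (u ^ p) + d ^ p" .
  show ?thesis unfolding eq5_def eq
    using fps_power_low[OF d0] p(3) by auto
qed

end



context hs
begin

lemma mp_add: "map_poly \<iota> (P + Q) = map_poly \<iota> P + map_poly \<iota> Q"
  by (rule poly_eqI) (simp add: coeff_map_poly i0 iadd)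

lemma mp_diff: "map_poly \<iota> (P - Q) = map_poly \<iota> P - map_poly \<iota> Q"
  by (rule poly_eqI) (simp add: coeff_map_poly i0 idiff)

lemma mp_mult: "map_poly \<iota> (P * Q) = map_poly \<iota> P * map_poly \<iota> Q"
  by (rule poly_eqI) (simp add: coeff_map_poly i0 coeff_mult isum imult)

lemma mp_one: "map_poly \<iota> 1 = 1"
  by (rule poly_eqI) (simp add: coeff_map_poly i0 i1 coeff_1)

lemma mp_power: "map_poly \<iota> (P ^ j) = map_poly \<iota> P ^ j"
  by (induct j) (simp_all add: mp_one mp_mult)

lemma mp_smult: "map_poly \<iota> (smult c P) = smult (\<iota> c) (map_poly \<iota> P)"
  by (rule poly_eqI) (simp add: coeff_map_poly i0 imult)

lemma mp_monom: "map_poly \<iota> (Polynomial.monom c j) = Polynomial.monom (\<iota> c) j"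
  by (simp add: map_poly_monom i0)

end

locale fc = hs \<iota> D for \<iota> :: "'a::field \<Rightarrow> 'k::field" and D +
  fixes a b :: 'a and n m p q :: nat and x y \<tau> :: 'k
  assumes eqn: "\<iota> a * x ^ n + \<iota> b * y ^ m = 1"
    and transc: "\<And>N c. (\<Sum>i<N. \<iota> (c i) * x ^ i) = 0 \<Longrightarrow> \<forall>i<N. c i = 0"
    and gen: "\<forall>z. \<exists>(N::nat) (P::nat \<Rightarrow> nat \<Rightarrow> 'a) (Q::nat \<Rightarrow> nat \<Rightarrow> 'a).
        (\<Sum>i<N. \<Sum>j<N. \<iota> (Q i j) * x ^ i * y ^ j) \<noteq> 0 \<and>
        z = (\<Sum>i<N. \<Sum>j<N. \<iota> (P i j) * x ^ i * y ^ j) /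
            (\<Sum>i<N. \<Sum>j<N. \<iota> (Q i j) * x ^ i * y ^ j)"
    and tau: "D 1 \<tau> = 1"
    and a0: "a \<noteq> 0" and b0: "b \<noteq> 0"
    and pprime: "prime p" and p5: "p > 5" and charp: "of_nat p = (0::'k)"
    and qodd: "odd q" and q2: "q \<ge> 2"
    and mn: "m \<le> n" and m2: "2 < m"
    and pn: "p dvd (2 * n - 1)" and pm: "p dvd (m - 1)"
begin

lemma ev_zero:
  assumes "poly (map_poly \<iota> P) x = 0"
  shows "P = 0"
proof -
  let ?Q = "map_poly \<iota> P"
  have "poly ?Q x = (\<Sum>i<Suc (degree ?Q). \<iota> (coeff P i) * x ^ i)"
    by (simp add: poly_altdef coeff_map_poly i0 lessThan_Suc_atMost)
  then have "\<forall>i<Suc (degree ?Q). coeff P i = 0" using assms transc by metis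
  moreover have "coeff P i = 0" if "i > degree ?Q" for i
  proof -
    have "coeff ?Q i = 0" using that by (simp add: coeff_eq_0)
    then show ?thesis by (simp add: coeff_map_poly i0 ieq0)
  qed
  ultimately have "\<forall>i. coeff P i = 0" by (metis less_Suc_eq_le not_le)
  then show ?thesis by (simp add: poly_eq_iff)
qed

lemma x0: "x \<noteq> 0"
proof
  assume "x = 0"
  then have "poly (map_poly \<iota> (Polynomial.monom 1 1)) x = 0" by (simp add: mp_monom i1 poly_monom)
  then have "(Polynomial.monom 1 1 :: 'a poly) = 0" by (rule ev_zero)
  then show False by (simp add: monom_eq_0_iff)
qed

lemma npos: "n > 0" using mn m2 by simp

lemma y0: "y \<noteq> 0"
proof
  assume "y = 0"
  then have "\<iota> a * x ^ n = 1" using eqn m2 by (simp add: zero_power)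
  then have "poly (map_poly \<iota> (Polynomial.monom a n - 1)) x = 0" by (simp add: mp_monom mp_diff mp_one poly_monom)
  then have "monom a n - 1 = (0 :: 'a poly)" by (rule ev_zero)
  then have "coeff (Polynomial.monom a n - 1) n = 0" by simp
  then show False using npos a0 by (simp add: coeff_1)
qed

end



context fc
begin

definition "ww = \<iota> a * x ^ n"
definition "tt = \<iota> a ^ 2 * x ^ (2 * n - 1)"
definition "gg = \<iota> b * y ^ (m - 1)"
definition "ss = inverse gg"
definition "TT = inverse tt"

lemma gg0: "gg \<noteq> 0" using b0 y0 by (simp add: gg_def ieq0[symmetric] i0)
lemma tt0: "tt \<noteq> 0" using a0 x0 by (simp add: tt_def ieq0[symmetric] i0)

lemma poly_deg_aux:
  assumes "(c::'a) \<noteq> 0" "k > 0"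
  shows "degree ((1 + Polynomial.monom c k) ^ j) = j * k"
proof -
  have dg: "degree (1 + Polynomial.monom c k) = k"
    using assms by (subst degree_add_eq_right) (simp_all add: degree_monom_eq)
  moreover have nz: "1 + Polynomial.monom c k \<noteq> 0"
  proof
    assume "1 + Polynomial.monom c k = 0"
    then have "coeff (1 + Polynomial.monom c k) k = 0" by simp
    then show False using assms by (simp add: coeff_1)
  qed
  ultimately show ?thesis using degree_power_eq[OF nz, of j] dg by simp
qed

lemma ev_aux: "poly (map_poly \<iota> ((1 + Polynomial.monom (c::'a) k) ^ j)) x = (1 + \<iota> c * x ^ k) ^ j"
  by (simp add: mp_power mp_add mp_one mp_monom poly_monom)
lemma ev_aux_old: "poly (map_poly \<iota> ((1 + Polynomial.monom c k) ^ j)) x = (1 + \<iota> c * x ^ k) ^ j"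
  by (simp add: mp_power mp_add mp_one mp_monom poly_monom)

lemma ineq: "(y ^ q - ss) ^ 2 \<noteq> ss ^ 2 * tt * x ^ q"
proof
  assume H: "(y ^ q - ss) ^ 2 = ss ^ 2 * tt * x ^ q"
  have gs: "gg * ss = 1" using gg0 by (simp add: ss_def)
  have "(gg * y ^ q - 1) ^ 2 = (gg * (y ^ q - ss)) ^ 2" using gs by (simp add: right_diff_distrib)
  also have "\<dots> = gg ^ 2 * (ss ^ 2 * tt * x ^ q)" using H by (simp add: power_mult_distrib)
  also have "\<dots> = tt * x ^ q" using gs by (simp add: power_mult_distrib[symmetric] mult.assoc[symmetric])
  finally have H2: "(gg * y ^ q - 1) ^ 2 = tt * x ^ q" .
  have ev: "even (2 * n - 1 + q)"
  proof -
    have "2 * n - 1 + q = 2 * (n - 1) + (q + 1)" using npos by simp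
    then show ?thesis using qodd by simp
  qed
  define N where "N = (2 * n - 1 + q) div 2"
  have N: "2 * N = 2 * n - 1 + q" using ev by (simp add: N_def)
  have Npos: "N > 0" using N q2 by linarith
  have "(\<iota> a * x ^ N) ^ 2 = \<iota> a ^ 2 * (x ^ N) ^ 2" by (rule power_mult_distrib)
  also have "(x ^ N) ^ 2 = x ^ (2 * N)" by (metis power_mult mult.commute)
  also have "x ^ (2 * N) = x ^ (2 * n - 1) * x ^ q" by (simp only: N power_add)
  finally have "tt * x ^ q = (\<iota> a * x ^ N) ^ 2" by (simp add: tt_def mult.assoc)
  moreover have "(1 - gg * y ^ q) ^ 2 = (gg * y ^ q - 1) ^ 2" by (rule power2_commute)
  ultimately have "(1 - gg * y ^ q) ^ 2 = (\<iota> a * x ^ N) ^ 2" using H2 by simp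
  then have "1 - gg * y ^ q = \<iota> a * x ^ N \<or> 1 - gg * y ^ q = - (\<iota> a * x ^ N)"
    by (simp add: power2_eq_iff)
  then obtain c where c0: "c \<noteq> 0" and hc: "1 - gg * y ^ q = \<iota> c * x ^ N"
    using a0 by (metis iminus minus_mult_left neg_equal_0_iff_equal)
  have "gg * y ^ q = \<iota> b * y ^ m * y ^ (q - 1)"
  proof -
    have "m - 1 + q = m + (q - 1)" using m2 q2 by simp
    then show ?thesis by (simp add: gg_def mult.assoc power_add[symmetric])
  qed
  also have hb: "\<iota> b * y ^ m = 1 - ww" using eqn by (simp add: ww_def algebra_simps)
  finally have g1: "gg * y ^ q = (1 - ww) * y ^ (q - 1)" .
  have "(1 - ww) * y ^ (q - 1) = 1 - (1 - gg * y ^ q)" using g1 by simp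
  also have "\<dots> = 1 - \<iota> c * x ^ N" by (simp only: hc)
  finally have h1: "(1 - ww) * y ^ (q - 1) = 1 - \<iota> c * x ^ N" .
  have "(1 - \<iota> c * x ^ N) ^ m = (1 - ww) ^ m * (y ^ m) ^ (q - 1)"
  proof -
    have "(1 - \<iota> c * x ^ N) ^ m = (1 - ww) ^ m * (y ^ (q - 1)) ^ m"
      by (simp only: h1[symmetric] power_mult_distrib)
    also have "(y ^ (q - 1)) ^ m = (y ^ m) ^ (q - 1)" by (simp only: power_mult[symmetric] mult.commute)
    finally show ?thesis .
  qed
  then have "\<iota> (b ^ (q - 1)) * (1 - \<iota> c * x ^ N) ^ m = (1 - ww) ^ m * (\<iota> b * y ^ m) ^ (q - 1)"
    by (simp add: ipower power_mult_distrib)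
  also have "\<dots> = (1 - ww) ^ (m + (q - 1))" by (simp only: hb power_add)
  finally have h2: "\<iota> (b ^ (q - 1)) * (1 + \<iota> (- c) * x ^ N) ^ m = (1 + \<iota> (- a) * x ^ n) ^ (m + (q - 1))"
    by (simp add: iminus ww_def)
  define P1 where "P1 = smult (b ^ (q - 1)) ((1 + Polynomial.monom (- c) N) ^ m)"
  define P2 where "P2 = (1 + Polynomial.monom (- a) n) ^ (m + (q - 1))"
  have "poly (map_poly \<iota> (P1 - P2)) x = 0"
    using h2 by (simp add: P1_def P2_def mp_diff mp_smult ev_aux)
  then have "P1 - P2 = 0" by (rule ev_zero)
  then have "degree P1 = degree P2" by simp
  moreover have "degree P1 = m * N" using c0 Npos b0 by (simp add: P1_def poly_deg_aux)
  moreover have "degree P2 = (m + (q - 1)) * n" using a0 npos by (simp add: P2_def poly_deg_aux)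
  ultimately have E: "m * N = (m + (q - 1)) * n" by simp
  define Q where "Q = q - 1"
  have Q1: "Q \<ge> 1" using q2 by (simp add: Q_def)
  have NQ: "2 * N = 2 * n + Q" using N npos q2 by (simp add: Q_def)
  have "2 * (m * N) = m * (2 * N)" by simp
  also have "\<dots> = m * (2 * n) + m * Q" by (simp only: NQ distrib_left)
  finally have "2 * (m * N) = m * (2 * n) + m * Q" .
  moreover have "2 * ((m + Q) * n) = m * (2 * n) + Q * (2 * n)" by (simp add: algebra_simps)
  ultimately have "m * Q = Q * (2 * n)" using E by (simp add: Q_def)
  then have "m = 2 * n" using Q1 by (simp add: mult.commute)
  then show False using mn npos by simp
qed

end



lemma ring_id:
  fixes V0 V1 V2 V3 V4 V5 TT S Ww d :: "'r::comm_ring_1"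
  shows "V0 * (TT * (Ww + d)^2)^2 + V1 * ((TT * (Ww + d)^2) * (S * (1 - (Ww + d))))
       + V2 * (S * (1 - (Ww + d)))^2 + V3 * (TT * (Ww + d)^2) + V4 * (S * (1 - (Ww + d))) + V5 * 1
   = (V0*TT^2*Ww^4 + V1*TT*S*(Ww^2 - Ww^3) + V2*S^2*(1-Ww)^2 + V3*TT*Ww^2 + V4*S*(1-Ww) + V5)
     + (4*Ww^3*V0*TT^2 + V1*TT*S*(2*Ww - 3*Ww^2) - 2*V2*S^2*(1-Ww) + 2*V3*TT*Ww - V4*S) * d
     + (6*Ww^2*V0*TT^2 + V1*TT*S*(1 - 3*Ww) + V2*S^2 + V3*TT) * d^2
     + (4*Ww*V0*TT^2 - V1*TT*S) * d^3
     + (V0*TT^2) * d^4"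
  by (simp add: algebra_simps power2_eq_square power3_eq_cube power4_eq_xxxx)

definition isC :: "'k::comm_ring_1 fps \<Rightarrow> bool" where
  "isC f \<longleftrightarrow> f = fps_const (fps_nth f 0)"

lemma isC_const: "isC (fps_const c)" by (simp add: isC_def)
lemma isC_one: "isC 1" by (simp add: isC_def)
lemma isC_numeral: "isC (numeral k)" by (simp add: isC_def numeral_fps_const)
lemma isC_add: "isC f \<Longrightarrow> isC g \<Longrightarrow> isC (f + g)"
  unfolding isC_def by (metis fps_add_nth fps_const_add)
lemma isC_diff: "isC f \<Longrightarrow> isC g \<Longrightarrow> isC (f - g)"
  unfolding isC_def by (metis fps_sub_nth fps_const_sub)
lemma isC_mult: "isC f \<Longrightarrow> isC g \<Longrightarrow> isC (f * g)"
  unfolding isC_def by (metis fps_const_mult fps_mult_nth_0)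
lemma isC_power: "isC f \<Longrightarrow> isC (f ^ j)"
  by (induct j) (simp_all add: isC_one isC_mult)

lemmas isC_intros = isC_const isC_one isC_numeral isC_add isC_diff isC_mult isC_power

lemma triang':
  fixes d :: "'k::field fps"
  assumes d0: "fps_nth d 0 = 0" and d1: "fps_nth d 1 \<noteq> 0"
    and C: "isC A0" "isC A1" "isC A2" "isC A3" "isC A4"
    and e: "eq5 (A0 + A1 * d + A2 * d^2 + A3 * d^3 + A4 * d^4) 0"
  shows "fps_nth A0 0 = 0 \<and> fps_nth A1 0 = 0 \<and> fps_nth A2 0 = 0 \<and> fps_nth A3 0 = 0 \<and> fps_nth A4 0 = 0"
  apply (rule triang[OF d0 d1])
  using e C unfolding isC_def by metis

context fc
begin

definition "ll = (2 * n - 1) div p"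
definition "kk = (m - 1) div p"

lemma p4: "p > 4" using p5 by simp

lemma tt_pow: "tt = \<iota> (a ^ 2) * (x ^ ll) ^ p"
  using pn by (simp add: tt_def ll_def ipower power_mult[symmetric] mult.commute)

lemma gg_pow: "gg = \<iota> b * (y ^ kk) ^ p"
  using pm by (simp add: gg_def kk_def power_mult[symmetric] mult.commute)

lemma cst_i: "eq5 (th (\<iota> c)) (fps_const (\<iota> c))"
  by (simp add: th_const eq5_refl)

lemma cst_tt: "eq5 (th tt) (fps_const tt)"
  unfolding tt_pow by (intro const_mult cst_i const_frob pprime charp p4)

lemma cst_gg: "eq5 (th gg) (fps_const gg)"
  unfolding gg_pow by (intro const_mult cst_i const_frob pprime charp p4)

lemma cst_TT: "eq5 (th TT) (fps_const TT)"
  unfolding TT_def by (intro const_inverse cst_tt tt0)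

lemma cst_ss: "eq5 (th ss) (fps_const ss)"
  unfolding ss_def by (intro const_inverse cst_gg gg0)

lemma TT0: "TT \<noteq> 0" using tt0 by (simp add: TT_def)
lemma ss0: "ss \<noteq> 0" using gg0 by (simp add: ss_def)

lemma x_eq: "x = TT * ww ^ 2"
proof -
  have "x ^ (2 * n) = x ^ (2 * n - 1) * x" using npos
    by (metis power_Suc2 Suc_diff_1 mult_pos_pos zero_less_numeral)
  then have "ww ^ 2 = tt * x"
    by (simp add: ww_def tt_def power_mult_distrib power_mult[symmetric] mult.commute mult.left_commute)
  then show ?thesis using tt0 by (simp add: TT_def)
qed

lemma y_eq: "y = ss * (1 - ww)"
proof -
  have "gg * y = \<iota> b * y ^ m" using m2
    by (simp add: gg_def mult.assoc power_Suc2[symmetric])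
  also have "\<dots> = 1 - ww" using eqn by (simp add: ww_def algebra_simps)
  finally show ?thesis using gg0 by (simp add: ss_def field_simps)
qed

lemma D1ww: "D 1 ww \<noteq> 0"
proof
  assume w1: "D 1 ww = 0"
  have T1: "D 1 TT = 0" using cst_TT unfolding eq5_def by (metis th_nth fps_nth_fps_const one_neq_zero one_le_numeral)
  have s1: "D 1 ss = 0" using cst_ss unfolding eq5_def by (metis th_nth fps_nth_fps_const one_neq_zero one_le_numeral)
  have x1: "D 1 x = 0"
    using D1mult[of TT "ww^2"] D1power[OF w1, of 2] T1 x_eq by simp
  have y1: "D 1 y = 0"
    using D1mult[of ss "1 - ww"] s1 Ddiff[of 1 1 ww] Done[of 1] w1 y_eq by simp
  have P1: "D 1 (\<Sum>i<N. \<Sum>j<N. \<iota> (P i j) * x ^ i * y ^ j) = 0" for N P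
    using D1mult[simplified] D1power[OF x1, simplified] D1power[OF y1, simplified] Dconst[of 1, simplified]
    by (simp add: Dsum)
  obtain N P Q where Q0: "(\<Sum>i<N. \<Sum>j<N. \<iota> (Q i j) * x ^ i * y ^ j) \<noteq> 0"
    and tq: "\<tau> = (\<Sum>i<N. \<Sum>j<N. \<iota> (P i j) * x ^ i * y ^ j) / (\<Sum>i<N. \<Sum>j<N. \<iota> (Q i j) * x ^ i * y ^ j)"
    using gen by blast
  define QQ where "QQ = (\<Sum>i<N. \<Sum>j<N. \<iota> (Q i j) * x ^ i * y ^ j)"
  define PP where "PP = (\<Sum>i<N. \<Sum>j<N. \<iota> (P i j) * x ^ i * y ^ j)"
  have "\<tau> * QQ = PP" using Q0 tq by (simp add: QQ_def PP_def)
  then have "D 1 (\<tau> * QQ) = 0" using P1 by (simp add: PP_def)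
  then have "\<tau> * D 1 QQ + D 1 \<tau> * QQ = 0" by (simp only: D1mult)
  then have "QQ = 0" using P1[where P=Q and N=N] tau by (simp add: QQ_def)
  then show False using Q0 by (simp add: QQ_def)
qed

end



context fc
begin

lemma vsolve:
  assumes Dk: "\<And>k. k \<le> 4 \<Longrightarrow> v0 * D k (x^2) + v1 * D k (x*y) + v2 * D k (y^2) + v3 * D k x + v4 * D k y + v5 * D k 1 = 0"
    and E0: "v0 * (x^q)^2 + v1 * (x^q * y^q) + v2 * (y^q)^2 + v3 * x^q + v4 * y^q + v5 = 0"
  shows "v0 = 0 \<and> v1 = 0 \<and> v2 = 0 \<and> v3 = 0 \<and> v4 = 0 \<and> v5 = 0"
proof -
  define W where "W = th ww"
  define d where "d = W - fps_const ww"
  have d0: "fps_nth d 0 = 0" by (simp add: d_def W_def D0)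
  have d1: "fps_nth d 1 \<noteq> 0" using D1ww by (simp add: d_def W_def)
  have Wd: "W = fps_const ww + d" by (simp add: d_def)
  have hx: "eq5 (th x) (fps_const TT * W^2)"
  proof -
    have "th x = th TT * W^2" by (subst x_eq) (simp add: th_mult th_power W_def)
    then show ?thesis using eq5_mult[OF cst_TT eq5_refl[of "W^2"]] by simp
  qed
  have hy: "eq5 (th y) (fps_const ss * (1 - W))"
  proof -
    have "th y = th ss * (1 - W)" by (subst y_eq) (simp add: th_mult th_diff th_one W_def)
    then show ?thesis using eq5_mult[OF cst_ss eq5_refl[of "1 - W"]] by simp
  qed
  define F where "F = fps_const v0 * th x ^ 2 + fps_const v1 * (th x * th y) + fps_const v2 * th y ^ 2
     + fps_const v3 * th x + fps_const v4 * th y + fps_const v5 * 1"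
  have F0: "eq5 F 0"
  proof -
    have "F = fps_const v0 * th (x^2) + fps_const v1 * th (x * y) + fps_const v2 * th (y^2)
     + fps_const v3 * th x + fps_const v4 * th y + fps_const v5 * th 1"
      by (simp add: F_def th_power th_mult th_one)
    then show ?thesis unfolding eq5_def using Dk by simp
  qed
  define G where "G = fps_const v0 * (fps_const TT * W^2)^2
     + fps_const v1 * ((fps_const TT * W^2) * (fps_const ss * (1 - W)))
     + fps_const v2 * (fps_const ss * (1 - W))^2 + fps_const v3 * (fps_const TT * W^2)
     + fps_const v4 * (fps_const ss * (1 - W)) + fps_const v5 * 1"
  have FG: "eq5 F G" unfolding F_def G_def
    by (intro eq5_add eq5_mult eq5_power hx hy eq5_refl)
  have G0: "eq5 G 0" using FG F0 by (meson eq5_sym eq5_trans)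
  let ?V0 = "fps_const v0" and ?V1 = "fps_const v1" and ?V2 = "fps_const v2" and ?V3 = "fps_const v3"
    and ?V4 = "fps_const v4" and ?V5 = "fps_const v5" and ?T = "fps_const TT" and ?S = "fps_const ss"
    and ?w = "fps_const ww"
  have "G = (?V0*?T^2*?w^4 + ?V1*?T*?S*(?w^2 - ?w^3) + ?V2*?S^2*(1-?w)^2 + ?V3*?T*?w^2 + ?V4*?S*(1-?w) + ?V5)
     + (4*?w^3*?V0*?T^2 + ?V1*?T*?S*(2*?w - 3*?w^2) - 2*?V2*?S^2*(1-?w) + 2*?V3*?T*?w - ?V4*?S) * d
     + (6*?w^2*?V0*?T^2 + ?V1*?T*?S*(1 - 3*?w) + ?V2*?S^2 + ?V3*?T) * d^2
     + (4*?w*?V0*?T^2 - ?V1*?T*?S) * d^3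
     + (?V0*?T^2) * d^4"
    unfolding G_def Wd by (rule ring_id)
  with G0 have Z: "fps_nth (?V0*?T^2*?w^4 + ?V1*?T*?S*(?w^2 - ?w^3) + ?V2*?S^2*(1-?w)^2 + ?V3*?T*?w^2 + ?V4*?S*(1-?w) + ?V5) 0 = 0
     \<and> fps_nth (4*?w^3*?V0*?T^2 + ?V1*?T*?S*(2*?w - 3*?w^2) - 2*?V2*?S^2*(1-?w) + 2*?V3*?T*?w - ?V4*?S) 0 = 0
     \<and> fps_nth (6*?w^2*?V0*?T^2 + ?V1*?T*?S*(1 - 3*?w) + ?V2*?S^2 + ?V3*?T) 0 = 0
     \<and> fps_nth (4*?w*?V0*?T^2 - ?V1*?T*?S) 0 = 0
     \<and> fps_nth (?V0*?T^2) 0 = 0"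
    by (intro triang'[OF d0 d1] isC_intros) simp
  have z4: "v0 * TT^2 = 0" using Z by simp
  have v0: "v0 = 0" using z4 TT0 by simp
  have z3: "4*ww*v0*TT^2 - v1*TT*ss = 0" using Z by simp
  have v1: "v1 = 0" using z3 v0 TT0 ss0 by simp
  have z2: "6*ww^2*v0*TT^2 + v1*TT*ss*(1 - 3*ww) + v2*ss^2 + v3*TT = 0" using Z by simp
  have r2: "v3 * TT = - (v2 * ss^2)" using z2 v0 v1 by (simp add: eq_neg_iff_add_eq_0 add.commute)
  have z1: "4*ww^3*v0*TT^2 + v1*TT*ss*(2*ww - 3*ww^2) - 2*v2*ss^2*(1-ww) + 2*v3*TT*ww - v4*ss = 0"
    using Z by simp
  have "2*v2*ss^2 + v4*ss = 0"
  proof -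
    have "0 = - 2*v2*ss^2*(1-ww) + 2*(v3*TT)*ww - v4*ss" using z1 v0 v1 by (simp add: algebra_simps)
    also have "\<dots> = - (2*v2*ss^2 + v4*ss)" unfolding r2 by (simp add: algebra_simps)
    finally have "- (2*v2*ss^2 + v4*ss) = 0" by (rule sym)
    then show ?thesis by (simp only: neg_equal_0_iff_equal)
  qed
  then have "(v4 + 2*v2*ss) * ss = 0" by (simp add: algebra_simps power2_eq_square)
  then have "v4 + 2*v2*ss = 0" using ss0 by simp
  then have v4: "v4 = - (2 * v2 * ss)" by (simp only: eq_neg_iff_add_eq_0)
  have z0: "v0*TT^2*ww^4 + v1*TT*ss*(ww^2 - ww^3) + v2*ss^2*(1-ww)^2 + v3*TT*ww^2 + v4*ss*(1-ww) + v5 = 0"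
    using Z by (simp add: fps_nth_power_0)
  have v5: "v5 = v2 * ss^2"
  proof -
    have "0 = v2*ss^2*(1-ww)^2 + (v3*TT)*ww^2 + v4*ss*(1-ww) + v5" using z0 v0 v1 by (simp add: algebra_simps)
    also have "\<dots> = v5 - v2 * ss^2" unfolding r2 v4 by (simp add: algebra_simps power2_eq_square)
    finally show ?thesis by simp
  qed
  have v3: "v3 = - (v2 * ss^2 * tt)"
  proof -
    have "v3 = v3 * TT * tt" using tt0 by (simp add: TT_def)
    then show ?thesis using r2 by simp
  qed
  have "v2 * ((y^q - ss)^2 - ss^2 * tt * x^q) = 0"
  proof -
    have "v2 * ((y^q - ss)^2 - ss^2 * tt * x^q) = v2 * (y^q)^2 + v3 * x^q + v4 * y^q + v5"
      unfolding v3 v4 v5 by (simp add: algebra_simps power2_eq_square)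
    also have "\<dots> = 0" using E0 v0 v1 by simp
    finally show ?thesis .
  qed
  then have v2: "v2 = 0" using ineq by simp
  show ?thesis using v0 v1 v2 v3 v4 v5 by simp
qed

end



lemma lexmin:
  assumes len: "length (\<nu>::nat list) = 5" and s: "sorted_wrt (<) \<nu>"
  shows "[0, 1, 2, 3, 4] = \<nu> \<or> lexordp (<) [0, 1, 2, 3, 4] \<nu>"
proof -
  obtain a0 a1 a2 a3 a4 where nu: "\<nu> = [a0, a1, a2, a3, a4]"
    using len by (auto simp: numeral_eq_Suc length_Suc_conv)
  show ?thesis using s unfolding nu by (auto simp: List.lexordp_def)
qed

lemma sum6: "(\<Sum>j<(6::nat). f j) = f 0 + f 1 + f 2 + f 3 + f 4 + (f 5 :: 'k::comm_monoid_add)"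
  by (simp add: eval_nat_numeral add.assoc)

lemma card_field_ge2: "card (UNIV :: 'a::{finite,field} set) \<ge> 2"
proof -
  have "card {0::'a, 1} = 2" by simp
  moreover have "card {0::'a, 1} \<le> card (UNIV :: 'a set)" by (rule card_mono) simp_all
  ultimately show ?thesis by simp
qed

theorem proposition3p13:
  fixes p h n m q :: nat and a b :: "'a::{finite, field}"
    and \<iota> :: "'a \<Rightarrow> 'k::field" and x y \<tau> :: 'k and D :: "nat \<Rightarrow> 'k \<Rightarrow> 'k"
  assumes "prime p" and "p > 5" and "q = p ^ h" and "card (UNIV :: 'a set) = q"
    and "a \<noteq> 0" and "b \<noteq> 0"
    and "n \<ge> m" and "m > 2"
    and "p dvd (2 * n - 1)" and "p dvd (m - 1)"
    and "fermat_function_field \<iota> a b n m x y"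
    and "hasse_derivatives \<iota> \<tau> D"
  shows "frob_classical_conics q D x y"
proof -
  note ff = assms(11)[unfolded fermat_function_field_def]
  note hd = assms(12)[unfolded hasse_derivatives_def]
  interpret hs \<iota> D
    by unfold_locales (use ff hd in auto)
  have charA: "of_nat p = (0::'a)" using char_finite_field[OF assms(1)] assms(3,4) by blast
  have charK: "of_nat p = (0::'k)" using iof_nat[of p] charA i0 by simp
  have q2: "q \<ge> 2" using card_field_ge2[where 'a='a] assms(4) by simp
  have podd: "odd p" using assms(1,2) prime_odd_nat by auto
  have qodd: "odd q" using podd assms(3) by simp
  interpret fc \<iota> D a b n m p q x y \<tau>
  proof (unfold_locales)
    show "\<And>N c. (\<Sum>i<N. \<iota> (c i) * x ^ i) = 0 \<Longrightarrow> \<forall>i<N. c i = 0" using ff by blast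
  qed (use ff hd assms charK q2 qodd in auto)
  define \<phi> where "\<phi> = conic_monomials x y"
  define A where "A = mat 6 6 (\<lambda>(i, j). if i = 0 then (\<phi> ! j) ^ q else D ([0, 1, 2, 3, 4] ! (i - 1)) (\<phi> ! j))"
  have det: "frob_conic_det q D \<phi> [0, 1, 2, 3, 4] \<noteq> 0"
  proof
    assume "frob_conic_det q D \<phi> [0, 1, 2, 3, 4] = 0"
    moreover have "det A = frob_conic_det q D \<phi> [0, 1, 2, 3, 4]" unfolding frob_conic_det_def A_def by (rule refl)
    ultimately have "det A = 0" by simp
    moreover have Ac: "A \<in> carrier_mat 6 6" by (simp add: A_def)
    ultimately obtain v where v: "v \<in> carrier_vec 6" "v \<noteq> 0\<^sub>v 6" "A *\<^sub>v v = 0\<^sub>v 6"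
      using det_0_iff_vec_prod_zero[OF Ac] by blast
    have row: "(\<Sum>j<6. A $$ (i, j) * v $ j) = 0" if "i < 6" for i
    proof -
      have "(A *\<^sub>v v) $ i = 0" using v(3) that by simp
      moreover have "(A *\<^sub>v v) $ i = (\<Sum>j<6. A $$ (i, j) * v $ j)"
        using that v(1) Ac by (simp add: scalar_prod_def atLeast0LessThan)
      ultimately show ?thesis by simp
    qed
    have nuk: "[0, 1, 2, 3, 4] ! k = (k::nat)" if "k \<le> 4" for k
    proof -
      have "[0, 1, 2, 3, 4] = [0..<5::nat]" by (simp add: upt_rec)
      then show ?thesis using that by (simp add: nth_upt)
    qed
    have Dk: "v $ 0 * D k (x^2) + v $ 1 * D k (x*y) + v $ 2 * D k (y^2) + v $ 3 * D k x + v $ 4 * D k y + v $ 5 * D k 1 = 0"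
      if "k \<le> 4" for k
    proof -
      have Aij: "A $$ (Suc k, j) = D k (\<phi> ! j)" if "j < 6" for j
      proof -
        have "Suc k < 6" using \<open>k \<le> 4\<close> by simp
        then show ?thesis using that nuk[OF \<open>k \<le> 4\<close>] by (simp add: A_def)
      qed
      have "(\<Sum>j<6. A $$ (Suc k, j) * v $ j) = 0" using row[of "Suc k"] that by simp
      then show ?thesis unfolding sum6 using Aij[of 0] Aij[of 1] Aij[of 2] Aij[of 3] Aij[of 4] Aij[of 5]
        by (simp add: \<phi>_def conic_monomials_def mult.commute)
    qed
    have E0: "v $ 0 * (x^q)^2 + v $ 1 * (x^q * y^q) + v $ 2 * (y^q)^2 + v $ 3 * x^q + v $ 4 * y^q + v $ 5 = 0"
    proof -
      have Aij: "A $$ (0, j) = (\<phi> ! j) ^ q" if "j < 6" for j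
        using that by (simp add: A_def)
      have "(\<Sum>j<6. A $$ (0, j) * v $ j) = 0" using row[of 0] by simp
      then show ?thesis unfolding sum6 using Aij[of 0] Aij[of 1] Aij[of 2] Aij[of 3] Aij[of 4] Aij[of 5]
        by (simp add: \<phi>_def conic_monomials_def mult.commute power_mult_distrib flip: power_mult)
    qed
    have "v $ 0 = 0 \<and> v $ 1 = 0 \<and> v $ 2 = 0 \<and> v $ 3 = 0 \<and> v $ 4 = 0 \<and> v $ 5 = 0"
      by (rule vsolve[OF Dk E0])
    then have "v = 0\<^sub>v 6"
      using v(1) by (intro eq_vecI) (auto simp: less_Suc_eq numeral_eq_Suc)
    with v(2) show False by simp
  qed
  show ?thesis
    unfolding frob_classical_conics_def frob_conic_order_seq_def
    using det lexmin by (simp add: \<phi>_def)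
qed


end
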